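(* Let $\Gamma$ be a splice diagram satisfying the edge determinant and semigroup conditions. Then for all nodes $u,v$ of $\Gamma$ and every edge $e$ adjacent to $v$, the admissible co-weight satisfies $w_u\cdot m_{v,e}\geq \ell_{u,v}$, with equality if and only if $e\not\subseteq[u,v]$.
   Context: A splice diagram is a finite tree $\Gamma$ with at least one vertex of valency $\geq3$ and no vertex of valency $2$; vertices of valency $1$ are leaves, the others nodes. For each node $v$ and edge $e$ at $v$ a positive integer weight $d_{v,e}$ is given; $d_{v,u}:=d_{v,e}$ for $e$ the edge at $v$ on the geodesic $[v,u]$; $d_v=\prod_{e\ni v}d_{v,e}$. For distinct vertices $u,v$, $\ell_{u,v}$ is the product of all $d_{w,e}$ with $w$ a node on $[u,v]$ and $e$ an edge at $w$ not in $[u,v]$; $\ell_{v,v}:=d_v$. Edge determinant condition: $d_{u,v}d_{v,u}>\ell_{u,v}$ for each edge between two nodes. Semigroup condition: for each node $v$ and edge $e$ at $v$, $d_v\in\sum_{\lambda\in L(v,e)}\mathbb{N}\,\ell_{v,\lambda}$, $L(v,e)$ being the set of leaves $\lambda$ with $e\subseteq[v,\lambda]$. With $n$ leaves, $\mathbb{R}^n$ has standard basis $(w_\lambda)$ indexed by leaves, and $w_u=\sum_\lambda\ell_{u,\lambda}w_\lambda$ for a node $u$. An admissible co-weight is $m_{v,e}=\sum_{\lambda\in L(v,e)}\alpha_{v,e,\lambda}w_\lambda$ where $\alpha_{v,e,\lambda}\in\mathbb{N}$ are any fixed numbers with $d_v=\sum_{\lambda\in L(v,e)}\alpha_{v,e,\lambda}\ell_{v,\lambda}$.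 When $u=v$, $[u,v]$ is the single vertex $v$. *)

theory Defs
  imports Main
begin

definition is_path :: "'v set set \<Rightarrow> 'v \<Rightarrow> 'v \<Rightarrow> 'v list \<Rightarrow> bool" where
  "is_path E u v xs \<longleftrightarrow> xs \<noteq> [] \<and> hd xs = u \<and> last xs = v \<and> distinct xs \<and>
     (\<forall>i. Suc i < length xs \<longrightarrow> {xs ! i, xs ! Suc i} \<in> E)"

definition is_tree :: "'v set \<Rightarrow> 'v set set \<Rightarrow> bool" where
  "is_tree V E \<longleftrightarrow> finite V \<and>
     (\<forall>e\<in>E. \<exists>a b. a \<noteq> b \<and> a \<in> V \<and> b \<in> V \<and> e = {a, b}) \<and>
     (\<forall>u\<in>V. \<forall>v\<in>V. \<exists>!xs. is_path E u v xs)"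

definition geod :: "'v set set \<Rightarrow> 'v \<Rightarrow> 'v \<Rightarrow> 'v list" where
  "geod E u v = (THE xs. is_path E u v xs)"

definition geod_verts :: "'v set set \<Rightarrow> 'v \<Rightarrow> 'v \<Rightarrow> 'v set" where
  "geod_verts E u v = set (geod E u v)"

definition geod_edges :: "'v set set \<Rightarrow> 'v \<Rightarrow> 'v \<Rightarrow> 'v set set" where
  "geod_edges E u v =
     {{geod E u v ! i, geod E u v ! Suc i} | i. Suc i < length (geod E u v)}"

definition edges_at :: "'v set set \<Rightarrow> 'v \<Rightarrow> 'v set set" where
  "edges_at E v = {e \<in> E. v \<in> e}"

definition valency :: "'v set set \<Rightarrow> 'v \<Rightarrow> nat" where
  "valency E v = card (edges_at E v)"

definition leaves :: "'v set \<Rightarrow> 'v set set \<Rightarrow> 'v set" where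
  "leaves V E = {v \<in> V. valency E v = 1}"

definition nodes :: "'v set \<Rightarrow> 'v set set \<Rightarrow> 'v set" where
  "nodes V E = V - leaves V E"

definition splice_tree :: "'v set \<Rightarrow> 'v set set \<Rightarrow> bool" where
  "splice_tree V E \<longleftrightarrow> is_tree V E \<and> (\<forall>v\<in>V. valency E v \<noteq> 2) \<and>
     (\<exists>v\<in>V. valency E v \<ge> 3)"

definition pos_weights :: "'v set \<Rightarrow> 'v set set \<Rightarrow> ('v \<Rightarrow> 'v set \<Rightarrow> nat) \<Rightarrow> bool" where
  "pos_weights V E d \<longleftrightarrow> (\<forall>v\<in>nodes V E. \<forall>e\<in>edges_at E v. d v e > 0)"

definition dnode :: "'v set set \<Rightarrow> ('v \<Rightarrow> 'v set \<Rightarrow> nat) \<Rightarrow> 'v \<Rightarrow> nat" where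
  "dnode E d v = (\<Prod>e\<in>edges_at E v. d v e)"

definition ell :: "'v set \<Rightarrow> 'v set set \<Rightarrow> ('v \<Rightarrow> 'v set \<Rightarrow> nat) \<Rightarrow> 'v \<Rightarrow> 'v \<Rightarrow> nat" where
  "ell V E d u v =
     (if u = v then dnode E d v
      else (\<Prod>w\<in>nodes V E \<inter> geod_verts E u v.
              \<Prod>e\<in>edges_at E w - geod_edges E u v. d w e))"

definition Lset :: "'v set \<Rightarrow> 'v set set \<Rightarrow> 'v \<Rightarrow> 'v set \<Rightarrow> 'v set" where
  "Lset V E v e = {l \<in> leaves V E. e \<in> geod_edges E v l}"

definition edge_determinant :: "'v set \<Rightarrow> 'v set set \<Rightarrow> ('v \<Rightarrow> 'v set \<Rightarrow> nat) \<Rightarrow> bool" where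
  "edge_determinant V E d \<longleftrightarrow>
     (\<forall>u\<in>nodes V E. \<forall>v\<in>nodes V E. {u, v} \<in> E \<longrightarrow> d u {u, v} * d v {u, v} > ell V E d u v)"

definition semigroup_cond :: "'v set \<Rightarrow> 'v set set \<Rightarrow> ('v \<Rightarrow> 'v set \<Rightarrow> nat) \<Rightarrow> bool" where
  "semigroup_cond V E d \<longleftrightarrow>
     (\<forall>v\<in>nodes V E. \<forall>e\<in>edges_at E v.
        \<exists>\<alpha>::'v \<Rightarrow> nat. dnode E d v = (\<Sum>l\<in>Lset V E v e. \<alpha> l * ell V E d v l))"

text \<open>Vectors in R^n with basis indexed by the leaves, as functions on leaves
(values outside the leaves are irrelevant and set to 0).\<close>
definition dotp :: "'v set \<Rightarrow> 'v set set \<Rightarrow> ('v \<Rightarrow> nat) \<Rightarrow> ('v \<Rightarrow> nat) \<Rightarrow> nat" where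
  "dotp V E x y = (\<Sum>l\<in>leaves V E. x l * y l)"

definition wvec :: "'v set \<Rightarrow> 'v set set \<Rightarrow> ('v \<Rightarrow> 'v set \<Rightarrow> nat) \<Rightarrow> 'v \<Rightarrow> 'v \<Rightarrow> nat" where
  "wvec V E d u = (\<lambda>l. if l \<in> leaves V E then ell V E d u l else 0)"

definition coweight :: "'v set \<Rightarrow> 'v set set \<Rightarrow> ('v \<Rightarrow> nat) \<Rightarrow> 'v \<Rightarrow> 'v set \<Rightarrow> 'v \<Rightarrow> nat" where
  "coweight V E \<alpha> v e = (\<lambda>l. if l \<in> Lset V E v e then \<alpha> l else 0)"

definition admissible :: "'v set \<Rightarrow> 'v set set \<Rightarrow> ('v \<Rightarrow> 'v set \<Rightarrow> nat) \<Rightarrow> 'v \<Rightarrow> 'v set \<Rightarrow> ('v \<Rightarrow> nat) \<Rightarrow> bool" where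
  "admissible V E d v e \<alpha> \<longleftrightarrow> dnode E d v = (\<Sum>l\<in>Lset V E v e. \<alpha> l * ell V E d v l)"

end

theory Submission
  imports Defs
begin

lemma is_path_alt: "is_path E a b xs \<longleftrightarrow> xs \<noteq> [] \<and> hd xs = a \<and> last xs = b \<and> distinct xs \<and>
   successively (\<lambda>x y. {x,y} \<in> E) xs"
  unfolding is_path_def successively_conv_nth by blast

fun pe :: "'v list \<Rightarrow> 'v set set" where
  "pe (a#b#xs) = insert {a,b} (pe (b#xs))"
| "pe _ = {}"

lemma pe_Cons: "pe (x # ys) = (if ys = [] then {} else insert {x, hd ys} (pe ys))"
  by (cases ys) auto

lemma pe_conv: "{{xs!i, xs!Suc i} | i. Suc i < length xs} = pe xs"
proof (induction xs rule: pe.induct)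
  case (1 a b xs)
  have "{{(a#b#xs)!i, (a#b#xs)!Suc i} | i. Suc i < length (a#b#xs)} =
        insert {a,b} {{(b#xs)!i, (b#xs)!Suc i} | i. Suc i < length (b#xs)}"
  proof (rule set_eqI, rule iffI)
    fix e assume "e \<in> {{(a#b#xs)!i, (a#b#xs)!Suc i} | i. Suc i < length (a#b#xs)}"
    then obtain i where i: "Suc i < length (a#b#xs)" "e = {(a#b#xs)!i, (a#b#xs)!Suc i}" by blast
    show "e \<in> insert {a,b} {{(b#xs)!i, (b#xs)!Suc i} | i. Suc i < length (b#xs)}"
    proof (cases i)
      case 0 then show ?thesis using i by simp
    next
      case (Suc j) then show ?thesis using i by auto
    qed
  next
    fix e assume "e \<in> insert {a,b} {{(b#xs)!i, (b#xs)!Suc i} | i. Suc i < length (b#xs)}"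
    then consider "e = {a,b}" | j where "Suc j < length (b#xs)" "e = {(b#xs)!j, (b#xs)!Suc j}" by blast
    then show "e \<in> {{(a#b#xs)!i, (a#b#xs)!Suc i} | i. Suc i < length (a#b#xs)}"
    proof cases
      case 1 then show ?thesis by force
    next
      case 2 then show ?thesis
        by (intro CollectI exI[of _ "Suc j"]) auto
    qed
  qed
  then show ?case using 1 by simp
qed auto

lemma geod_edges_pe: "geod_edges E a b = pe (geod E a b)"
  unfolding geod_edges_def pe_conv ..

lemma pe_subset_set: "e \<in> pe xs \<Longrightarrow> e \<subseteq> set xs"
  by (induction xs rule: pe.induct) auto

lemma pe_app: "pe (xs @ ys) = pe xs \<union> pe ys \<union> (if xs \<noteq> [] \<and> ys \<noteq> [] then {{last xs, hd ys}} else {})"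
  by (induction xs) (auto simp: pe_Cons)

lemma pe_rev: "pe (rev xs) = pe xs"
proof (induction xs)
  case (Cons x xs)
  then show ?case by (auto simp: pe_app pe_Cons last_rev insert_commute)
qed simp

lemma pe_in_E: "successively (\<lambda>x y. {x,y} \<in> E) xs \<Longrightarrow> pe xs \<subseteq> E"
  by (induction xs rule: pe.induct) auto

lemma pe_hd:
  assumes "is_path E a b xs" "e \<in> pe xs" "a \<in> e"
  shows "1 < length xs \<and> e = {a, xs!1}"
proof -
  obtain i where i: "Suc i < length xs" "e = {xs!i, xs!Suc i}"
    using assms(2) pe_conv[of xs] by blast
  have a0: "xs!0 = a" using assms(1) unfolding is_path_def by (metis hd_conv_nth)
  have dist: "distinct xs" using assms(1) unfolding is_path_def by simp
  have "i = 0"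
  proof (rule ccontr)
    assume "i \<noteq> 0"
    have dc: "\<forall>p<length xs. \<forall>q<length xs. p \<noteq> q \<longrightarrow> xs!p \<noteq> xs!q" using dist distinct_conv_nth by blast
    have "xs!0 \<noteq> xs!i" by (rule dc[rule_format]) (use i(1) \<open>i \<noteq> 0\<close> in auto)
    moreover have "xs!0 \<noteq> xs!Suc i" by (rule dc[rule_format]) (use i(1) in auto)
    ultimately
    show False using assms(3) i(2) a0 by auto
  qed
  then show ?thesis using i a0 by simp
qed

lemma prod_two_removed:
  assumes "finite A" "B \<inter> C \<inter> A = {}"
  shows "prod f A * prod f (A - (B \<union> C)) = prod f (A - B) * (prod f (A - C) :: nat)"
proof -
  let ?R = "A - (B \<union> C)"
  have f: "finite ?R" "finite (A \<inter> B)" "finite (A \<inter> C)" using assms by auto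
  have e1: "A - B = ?R \<union> (A \<inter> C)" "A - C = ?R \<union> (A \<inter> B)" "A = (?R \<union> (A \<inter> B)) \<union> (A \<inter> C)"
    using assms(2) by auto
  have p1: "prod f (A - B) = prod f ?R * prod f (A \<inter> C)"
    by (subst e1(1), rule prod.union_disjoint) (use f assms(2) in auto)
  have p2: "prod f (A - C) = prod f ?R * prod f (A \<inter> B)"
    by (subst e1(2), rule prod.union_disjoint) (use f in auto)
  have p3: "prod f A = prod f ?R * prod f (A \<inter> B) * prod f (A \<inter> C)"
    apply (subst e1(3))
    apply (subst prod.union_disjoint)
    using f assms(2) apply auto[3]
    apply (subst prod.union_disjoint)
    using f apply auto
    done
  show ?thesis unfolding p1 p2 p3 by (simp add: ac_simps)
qed


locale sp =
  fixes V :: "'v set" and E :: "'v set set" and d :: "'v \<Rightarrow> 'v set \<Rightarrow> nat"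
  assumes tree: "is_tree V E" and pw: "pos_weights V E d" and edet: "edge_determinant V E d"
begin

lemma finV: "finite V" using tree unfolding is_tree_def by blast

lemma edgeE: "e \<in> E \<Longrightarrow> \<exists>a b. a \<noteq> b \<and> a \<in> V \<and> b \<in> V \<and> e = {a, b}"
  using tree unfolding is_tree_def by blast

lemma finE: "finite E"
proof -
  have "E \<subseteq> Pow V" using edgeE by blast
  moreover have "finite (Pow V)" using finV by simp
  ultimately show ?thesis by (rule finite_subset)
qed

lemma edge2: "{x,y} \<in> E \<Longrightarrow> x \<noteq> y \<and> x \<in> V \<and> y \<in> V"
proof -
  assume "{x,y} \<in> E"
  then obtain a b where "a \<noteq> b" "a \<in> V" "b \<in> V" "{x,y} = {a,b}" using edgeE by blast
  then show ?thesis unfolding doubleton_eq_iff by blast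
qed

lemma ex1_path: "a \<in> V \<Longrightarrow> b \<in> V \<Longrightarrow> \<exists>!xs. is_path E a b xs"
  using tree unfolding is_tree_def by blast

lemma geod_path: "a \<in> V \<Longrightarrow> b \<in> V \<Longrightarrow> is_path E a b (geod E a b)"
  unfolding geod_def using ex1_path theI' by metis

lemma geod_eq: "a \<in> V \<Longrightarrow> b \<in> V \<Longrightarrow> is_path E a b xs \<Longrightarrow> geod E a b = xs"
  unfolding geod_def using ex1_path the1_equality by metis

lemma path_V: "is_path E a b xs \<Longrightarrow> a \<in> V \<Longrightarrow> set xs \<subseteq> V"
proof
  fix z assume p: "is_path E a b xs" and a: "a \<in> V" and z: "z \<in> set xs"
  then obtain i where i: "i < length xs" "z = xs!i" by (metis in_set_conv_nth)
  show "z \<in> V"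
  proof (cases i)
    case 0 then show ?thesis using p a i unfolding is_path_def by (metis hd_conv_nth)
  next
    case (Suc j)
    then have "{xs!j, xs!Suc j} \<in> E" using p i unfolding is_path_def by blast
    then show ?thesis using edge2 i Suc by blast
  qed
qed

lemma path_rev: "is_path E a b xs \<Longrightarrow> is_path E b a (rev xs)"
proof -
  have "successively (\<lambda>x y. {x,y} \<in> E) xs \<Longrightarrow> successively (\<lambda>x y. {y,x} \<in> E) xs"
    by (erule successively_mono) (simp add: insert_commute)
  then show "is_path E a b xs \<Longrightarrow> is_path E b a (rev xs)"
    unfolding is_path_alt by (simp add: hd_rev last_rev)
qed

lemma geod_rev: "a \<in> V \<Longrightarrow> b \<in> V \<Longrightarrow> geod E b a = rev (geod E a b)"
  by (intro geod_eq path_rev geod_path)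

lemma succ_take: "successively P xs \<Longrightarrow> successively P (take n xs)"
  by (metis append_take_drop_id successively_append_iff)

lemma succ_drop: "successively P xs \<Longrightarrow> successively P (drop n xs)"
  by (metis append_take_drop_id successively_append_iff)

lemma path_take: "is_path E a b xs \<Longrightarrow> i < length xs \<Longrightarrow> is_path E a (xs!i) (take (Suc i) xs)"
  unfolding is_path_alt
  apply (intro conjI)
  subgoal by (cases xs) auto
  subgoal by (cases xs) auto
  subgoal by (simp add: last_conv_nth nth_take)
  subgoal by simp
  subgoal by (simp add: succ_take)
  done

lemma path_drop: "is_path E a b xs \<Longrightarrow> i < length xs \<Longrightarrow> is_path E (xs!i) b (drop i xs)"
  unfolding is_path_alt
  apply (intro conjI)
  subgoal by simp
  subgoal by (simp add: hd_drop_conv_nth)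
  subgoal by simp
  subgoal by simp
  subgoal by (simp add: succ_drop)
  done

lemma path_append:
  assumes "is_path E a x xs" "is_path E x b ys" "set xs \<inter> set ys = {x}"
  shows "is_path E a b (xs @ tl ys)"
proof -
  obtain ys' where ys: "ys = x # ys'" using assms(2) unfolding is_path_def by (cases ys) auto
  have lx: "last xs = x" using assms(1) unfolding is_path_def by simp
  have "x \<notin> set ys'" using assms(2) ys unfolding is_path_def by simp
  then have dj: "set xs \<inter> set ys' = {}" using assms(3) ys by auto
  show ?thesis using assms(1,2) dj lx unfolding is_path_alt ys
    by (auto simp: successively_append_iff successively_Cons last_append)
qed

lemma path_single: "a \<in> V \<Longrightarrow> is_path E a a [a]"
  unfolding is_path_def by simp

lemma geod_self: "a \<in> V \<Longrightarrow> geod E a a = [a]"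
  by (intro geod_eq path_single)

lemma geod_split:
  assumes "a \<in> V" "b \<in> V" "x \<in> set (geod E a b)"
  shows "geod E a b = geod E a x @ tl (geod E x b) \<and> set (geod E a x) \<inter> set (geod E x b) = {x}"
proof -
  let ?P = "geod E a b"
  have P: "is_path E a b ?P" using geod_path assms by blast
  obtain i where i: "i < length ?P" "x = ?P!i" using assms(3) by (metis in_set_conv_nth)
  have xV: "x \<in> V" using path_V[OF P assms(1)] assms(3) by blast
  have g1: "geod E a x = take (Suc i) ?P" using geod_eq[OF assms(1) xV] path_take[OF P i(1)] i(2) by simp
  have g2: "geod E x b = drop i ?P" using geod_eq[OF xV assms(2)] path_drop[OF P i(1)] i(2) by simp
  have "tl (drop i ?P) = drop (Suc i) ?P" by (simp add: drop_Suc tl_drop)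
  then have e1: "geod E a b = geod E a x @ tl (geod E x b)" using g1 g2 by simp
  have dist: "distinct ?P" using P unfolding is_path_def by simp
  have "set (take (Suc i) ?P) \<inter> set (drop (Suc i) ?P) = {}"
    using dist by (metis append_take_drop_id distinct_append)
  moreover have "set (drop i ?P) = insert x (set (drop (Suc i) ?P))"
    using i by (metis Cons_nth_drop_Suc list.simps(15))
  moreover have "x \<in> set (take (Suc i) ?P)" using i by (simp add: take_Suc_conv_app_nth)
  ultimately have "set (geod E a x) \<inter> set (geod E x b) = {x}" using g1 g2 by auto
  then show ?thesis using e1 by blast
qed

lemma interior_node:
  assumes "is_path E a b xs" "a \<in> V" "0 < i" "Suc i < length xs"
  shows "xs!i \<in> nodes V E"
proof -
  have dist: "distinct xs" using assms(1) unfolding is_path_def by simp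
  have e1: "{xs!(i-1), xs!i} \<in> E" using assms unfolding is_path_def
    by (metis Suc_diff_1 Suc_lessD)
  have e2: "{xs!i, xs!Suc i} \<in> E" using assms unfolding is_path_def by blast
  have dc: "\<forall>p<length xs. \<forall>q<length xs. p \<noteq> q \<longrightarrow> xs!p \<noteq> xs!q" using dist distinct_conv_nth by blast
  have n1: "xs!(i-1) \<noteq> xs!Suc i" by (rule dc[rule_format]) (use assms in auto)
  have n2: "xs!(i-1) \<noteq> xs!i" by (rule dc[rule_format]) (use assms in auto)
  have ne: "{xs!(i-1), xs!i} \<noteq> {xs!i, xs!Suc i}" using n1 n2 unfolding doubleton_eq_iff by blast
  have sub: "{{xs!(i-1), xs!i}, {xs!i, xs!Suc i}} \<subseteq> edges_at E (xs!i)"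
    using e1 e2 unfolding edges_at_def by auto
  have "finite (edges_at E (xs!i))" using finE unfolding edges_at_def by simp
  then have "card {{xs!(i-1), xs!i}, {xs!i, xs!Suc i}} \<le> valency E (xs!i)"
    unfolding valency_def using sub card_mono by blast
  then have "valency E (xs!i) \<noteq> 1" using ne by simp
  moreover have "xs!i \<in> V" using e2 edge2 by blast
  ultimately show ?thesis unfolding nodes_def leaves_def by simp
qed


lemma median:
  assumes V: "a \<in> V" "b \<in> V" "c \<in> V"
    and m: "m < length (geod E a b)" "m < length (geod E a c)"
    and tk: "take (Suc m) (geod E a b) = take (Suc m) (geod E a c)"
  shows "\<exists>k\<ge>m. k < length (geod E a b) \<and> k < length (geod E a c) \<and>
     take (Suc k) (geod E a b) = take (Suc k) (geod E a c) \<and> geod E a b ! k \<in> set (geod E b c)"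
proof -
  define P where "P = geod E a b"
  define Q where "Q = geod E a c"
  have pP: "is_path E a b P" unfolding P_def using geod_path V by blast
  have pQ: "is_path E a c Q" unfolding Q_def using geod_path V by blast
  define S where "S = {k. k < length P \<and> k < length Q \<and> take (Suc k) P = take (Suc k) Q}"
  have finS: "finite S" unfolding S_def by (rule finite_subset[of _ "{..<length P}"]) auto
  have mS: "m \<in> S" unfolding S_def P_def Q_def using m tk by blast
  define k where "k = Max S"
  have kS: "k \<in> S" unfolding k_def using finS mS Max_in by blast
  have km: "m \<le> k" unfolding k_def using finS mS Max_ge by blast
  have kmax: "\<And>j. j \<in> S \<Longrightarrow> j \<le> k" unfolding k_def using finS Max_ge by blast
  have kP: "k < length P" and kQ: "k < length Q" and tkk: "take (Suc k) P = take (Suc k) Q"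
    using kS unfolding S_def by auto
  have wQ: "P!k = Q!k"
  proof -
    have "take (Suc k) P ! k = P ! k" by simp
    moreover have "take (Suc k) Q ! k = Q ! k" by simp
    ultimately show ?thesis using tkk by simp
  qed
  define w where "w = P!k"
  have X: "is_path E w b (drop k P)" unfolding w_def using path_drop[OF pP kP] .
  have Y: "is_path E w c (drop k Q)" unfolding w_def wQ using path_drop[OF pQ kQ] .
  have wV: "w \<in> V" unfolding w_def using path_V[OF pP V(1)] kP by auto
  have disj: "set (drop k P) \<inter> set (drop k Q) = {w}"
  proof
    show "{w} \<subseteq> set (drop k P) \<inter> set (drop k Q)"
      using X Y unfolding is_path_def by (metis hd_in_set empty_subsetI insert_subset IntI)
  next
    show "set (drop k P) \<inter> set (drop k Q) \<subseteq> {w}"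
    proof
      fix z assume z: "z \<in> set (drop k P) \<inter> set (drop k Q)"
      show "z \<in> {w}"
      proof (rule ccontr)
        assume zw: "z \<notin> {w}"
        obtain i' where i': "i' < length (drop k P)" "z = drop k P ! i'" using z by (metis IntD1 in_set_conv_nth)
        obtain j' where j': "j' < length (drop k Q)" "z = drop k Q ! j'" using z by (metis IntD2 in_set_conv_nth)
        define i where "i = k + i'"
        define j where "j = k + j'"
        have iP: "i < length P" "z = P!i" using i' unfolding i_def by auto
        have jQ: "j < length Q" "z = Q!j" using j' unfolding j_def by auto
        have ik: "k < i" using zw iP unfolding i_def w_def by (cases "i' = 0") auto
        have zV: "z \<in> V" using path_V[OF pP V(1)] iP by auto
        have t1: "geod E a z = take (Suc i) P" using geod_eq[OF V(1) zV] path_take[OF pP iP(1)] iP(2) by simp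
        have t2: "geod E a z = take (Suc j) Q" using geod_eq[OF V(1) zV] path_take[OF pQ jQ(1)] jQ(2) by simp
        have "length (take (Suc i) P) = Suc i" using iP by simp
        moreover have "length (take (Suc j) Q) = Suc j" using jQ by simp
        ultimately have "i = j" using t1 t2 by (metis Suc_inject)
        then have "i \<in> S" unfolding S_def using iP jQ t1 t2 by auto
        then show False using kmax ik by fastforce
      qed
    qed
  qed
  have pR: "is_path E b w (rev (drop k P))" using path_rev[OF X] .
  have "set (rev (drop k P)) \<inter> set (drop k Q) = {w}" using disj by simp
  then have "is_path E b c (rev (drop k P) @ tl (drop k Q))" using path_append[OF pR Y] by blast
  then have "geod E b c = rev (drop k P) @ tl (drop k Q)" using geod_eq V by blast
  moreover have "w \<in> set (rev (drop k P))" using disj by auto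
  ultimately have "w \<in> set (geod E b c)" by simp
  then show ?thesis using km kP kQ tkk unfolding w_def P_def Q_def by blast
qed


definition G :: "'v list \<Rightarrow> 'v \<Rightarrow> nat" where
  "G xs w = (\<Prod>e\<in>edges_at E w - pe xs. d w e)"

lemma ell_eq: "a \<noteq> b \<Longrightarrow> ell V E d a b = (\<Prod>w\<in>nodes V E \<inter> set (geod E a b). G (geod E a b) w)"
  unfolding ell_def G_def geod_verts_def geod_edges_pe by simp

lemma nodesV: "nodes V E \<subseteq> V" unfolding nodes_def by blast

lemma fin_edges_at: "finite (edges_at E w)" using finE unfolding edges_at_def by simp

lemma G_pos: "w \<in> nodes V E \<Longrightarrow> G xs w > 0"
  unfolding G_def using pw unfolding pos_weights_def
  by (intro prod_pos) blast

lemma dnode_pos: "v \<in> nodes V E \<Longrightarrow> dnode E d v > 0"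
  unfolding dnode_def using pw unfolding pos_weights_def
  by (intro prod_pos) blast

lemma ell_pos: "a \<noteq> b \<or> a \<in> nodes V E \<Longrightarrow> ell V E d a b > 0"
proof (cases "a = b")
  case True
  assume "a \<noteq> b \<or> a \<in> nodes V E"
  then show ?thesis using True dnode_pos unfolding ell_def by simp
next
  case False
  then show ?thesis unfolding ell_eq[OF False] using G_pos by (intro prod_pos) blast
qed

lemma ell_sym: "a \<in> V \<Longrightarrow> b \<in> V \<Longrightarrow> ell V E d a b = ell V E d b a"
proof (cases "a = b")
  case False
  assume "a \<in> V" "b \<in> V"
  then have "geod E b a = rev (geod E a b)" by (rule geod_rev)
  then show ?thesis using False unfolding ell_eq[OF False] ell_eq[OF False[symmetric]] G_def
    by (simp add: pe_rev)
qed simp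

lemma ell_mult:
  assumes V: "a \<in> V" "b \<in> V" and x: "x \<in> nodes V E" "x \<in> set (geod E a b)"
  shows "dnode E d x * ell V E d a b = ell V E d a x * ell V E d x b"
proof (cases "a = x \<or> x = b")
  case True
  then show ?thesis unfolding ell_def by auto
next
  case False
  then have ax: "a \<noteq> x" and xb: "x \<noteq> b" by auto
  have ab: "a \<noteq> b"
  proof
    assume "a = b"
    then have "geod E a b = [a]" using geod_self V by simp
    then show False using x ax by simp
  qed
  define P where "P = geod E a b"
  define X where "X = geod E a x"
  define Y where "Y = geod E x b"
  have xV: "x \<in> V" using x nodesV by blast
  have sp: "P = X @ tl Y" "set X \<inter> set Y = {x}"
    using geod_split[OF V x(2)] unfolding P_def X_def Y_def by auto
  have pX: "is_path E a x X" unfolding X_def using geod_path V xV by blast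
  have pY: "is_path E x b Y" unfolding Y_def using geod_path V xV by blast
  obtain Y' where Y': "Y = x # Y'" using pY unfolding is_path_def by (cases Y) auto
  have lX: "last X = x" "X \<noteq> []" using pX unfolding is_path_def by auto
  have peP: "pe P = pe X \<union> pe Y"
    using lX unfolding sp(1) Y' by (auto simp: pe_app pe_Cons)
  have xX: "x \<in> set X" using lX by auto
  have setP: "set P = set X \<union> set Y" unfolding sp(1) Y' using xX by auto
  define SX where "SX = nodes V E \<inter> set X - {x}"
  define SY where "SY = nodes V E \<inter> set Y - {x}"
  have fin: "finite SX" "finite SY" unfolding SX_def SY_def by auto
  have NP: "nodes V E \<inter> set P = insert x (SX \<union> SY)" using setP x xX unfolding SX_def SY_def Y' by auto
  have NX: "nodes V E \<inter> set X = insert x SX" using x xX unfolding SX_def by auto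
  have NY: "nodes V E \<inter> set Y = insert x SY" using x unfolding SX_def SY_def Y' by auto
  have dSXY: "SX \<inter> SY = {}" using sp(2) unfolding SX_def SY_def by auto
  have gX: "G P w = G X w" if w: "w \<in> SX" for w
  proof -
    have "edges_at E w - pe P = edges_at E w - pe X"
    proof -
      have "e \<notin> pe Y" if "e \<in> edges_at E w" for e
      proof
        assume "e \<in> pe Y"
        then have "w \<in> set Y" using pe_subset_set that unfolding edges_at_def by blast
        then show False using w sp(2) unfolding SX_def by blast
      qed
      then show ?thesis unfolding peP by blast
    qed
    then show ?thesis unfolding G_def by simp
  qed
  have gY: "G P w = G Y w" if w: "w \<in> SY" for w
  proof -
    have "edges_at E w - pe P = edges_at E w - pe Y"
    proof -
      have "e \<notin> pe X" if "e \<in> edges_at E w" for e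
      proof
        assume "e \<in> pe X"
        then have "w \<in> set X" using pe_subset_set that unfolding edges_at_def by blast
        then show False using w sp(2) unfolding SY_def by blast
      qed
      then show ?thesis unfolding peP by blast
    qed
    then show ?thesis unfolding G_def by simp
  qed
  have gx: "dnode E d x * G P x = G X x * G Y x"
  proof -
    have "pe X \<inter> pe Y \<inter> edges_at E x = {}"
    proof (rule ccontr)
      assume "pe X \<inter> pe Y \<inter> edges_at E x \<noteq> {}"
      then obtain e where e: "e \<in> pe X" "e \<in> pe Y" "e \<in> E" unfolding edges_at_def by blast
      then have "e \<subseteq> {x}" using pe_subset_set sp(2) by blast
      then show False using edgeE[OF e(3)] by auto
    qed
    then show ?thesis unfolding G_def dnode_def peP
      using prod_two_removed[OF fin_edges_at] by blast
  qed
  have "ell V E d a b = G P x * (prod (G P) SX * prod (G P) SY)"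
    unfolding ell_eq[OF ab] P_def[symmetric] NP
    using fin dSXY by (simp add: prod.union_disjoint SX_def SY_def)
  also have "\<dots> = G P x * (prod (G X) SX * prod (G Y) SY)"
    using gX gY by simp
  finally have eab: "ell V E d a b = G P x * (prod (G X) SX * prod (G Y) SY)" .
  have eax: "ell V E d a x = G X x * prod (G X) SX"
    unfolding ell_eq[OF ax] X_def[symmetric] NX using prod.insert[OF fin(1), of x "G X"] unfolding SX_def by blast
  have exb: "ell V E d x b = G Y x * prod (G Y) SY"
    unfolding ell_eq[OF xb] Y_def[symmetric] NY using prod.insert[OF fin(2), of x "G Y"] unfolding SY_def by blast
  show ?thesis unfolding eab eax exb using gx
    by (metis (no_types, lifting) mult.assoc mult.left_commute)
qed


lemma ell_edge:
  assumes "v \<in> nodes V E" "w \<in> nodes V E" "{v,w} \<in> E"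
  shows "ell V E d v w * (d v {v,w} * d w {v,w}) = dnode E d v * dnode E d w"
proof -
  have vw: "v \<noteq> w" "v \<in> V" "w \<in> V" using edge2[OF assms(3)] by auto
  have "is_path E v w [v,w]" unfolding is_path_alt using vw assms(3) by simp
  then have g: "geod E v w = [v,w]" using geod_eq vw by blast
  have pe2: "pe [v,w] = {{v,w}}" by simp
  have N: "nodes V E \<inter> set [v,w] = {v,w}" using assms by auto
  have e1: "ell V E d v w = G [v,w] v * G [v,w] w"
    unfolding ell_eq[OF vw(1)] g N using vw(1) by simp
  have ev: "{v,w} \<in> edges_at E v" "{v,w} \<in> edges_at E w" using assms(3) unfolding edges_at_def by auto
  have dv: "dnode E d v = d v {v,w} * G [v,w] v"
    unfolding dnode_def G_def pe2 using prod.remove[OF fin_edges_at ev(1)] by simp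
  have dw: "dnode E d w = d w {v,w} * G [v,w] w"
    unfolding dnode_def G_def pe2 using prod.remove[OF fin_edges_at ev(2)] by simp
  show ?thesis unfolding e1 dv dw by (simp add: ac_simps)
qed

lemma key_ineq:
  "v \<in> nodes V E \<Longrightarrow> w \<in> nodes V E \<Longrightarrow> v \<noteq> w \<Longrightarrow> (ell V E d v w)^2 < dnode E d v * dnode E d w"
proof (induction "length (geod E v w)" arbitrary: v w rule: less_induct)
  case less
  define P where "P = geod E v w"
  have vV: "v \<in> V" "w \<in> V" using less.prems nodesV by auto
  have pP: "is_path E v w P" unfolding P_def using geod_path vV by blast
  have P0: "P!0 = v" "P \<noteq> []" using pP unfolding is_path_def by (auto simp: hd_conv_nth)
  have Pl: "P!(length P - 1) = w" using pP unfolding is_path_def by (auto simp: last_conv_nth)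
  have dist: "distinct P" using pP unfolding is_path_def by simp
  have len: "2 \<le> length P"
  proof (rule ccontr)
    assume "\<not> 2 \<le> length P"
    moreover have "0 < length P" using P0(2) by simp
    ultimately have "length P = 1" by linarith
    then show False using P0 Pl less.prems(3) by simp
  qed
  have L0: "0 < ell V E d v w" using ell_pos less.prems by blast
  show ?case
  proof (cases "length P = 2")
    case True
    then have "P!1 = w" using Pl by simp
    moreover have "{P!0, P!Suc 0} \<in> E" using pP True unfolding is_path_def by simp
    ultimately have e: "{v,w} \<in> E" using P0 by simp
    have lt: "ell V E d v w < d v {v,w} * d w {v,w}"
      using edet less.prems e unfolding edge_determinant_def by blast
    have "(ell V E d v w)^2 = ell V E d v w * ell V E d v w" by (simp add: power2_eq_square)
    also have "\<dots> < ell V E d v w * (d v {v,w} * d w {v,w})" using lt L0 by simp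
    also have "\<dots> = dnode E d v * dnode E d w" using ell_edge less.prems e by blast
    finally show ?thesis .
  next
    case False
    then have len3: "Suc 1 < length P" using len by simp
    define x where "x = P!1"
    have xN: "x \<in> nodes V E" unfolding x_def using interior_node[OF pP vV(1)] len3 by simp
    have dc: "\<forall>p<length P. \<forall>q<length P. p \<noteq> q \<longrightarrow> P!p \<noteq> P!q" using dist distinct_conv_nth by blast
    have xv: "x \<noteq> v" unfolding x_def using dc[rule_format, of 1 0] len3 P0 by auto
    have xw: "x \<noteq> w" unfolding x_def using dc[rule_format, of 1 "length P - 1"] len3 Pl by auto
    have xV: "x \<in> V" using xN nodesV by blast
    have gvx: "geod E v x = take 2 P"
      using geod_eq[OF vV(1) xV] path_take[OF pP, of 1] len3 unfolding x_def by (simp add: numeral_2_eq_2)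
    have gxw: "geod E x w = drop 1 P"
      using geod_eq[OF xV vV(2)] path_drop[OF pP, of 1] len3 unfolding x_def by simp
    have IH1: "(ell V E d v x)^2 < dnode E d v * dnode E d x"
      by (rule less.hyps) (use gvx len3 less.prems xN xv in \<open>auto simp: P_def\<close>)
    have IH2: "(ell V E d x w)^2 < dnode E d x * dnode E d w"
      by (rule less.hyps) (use gxw len3 less.prems xN xw in \<open>auto simp: P_def\<close>)
    have xP: "x \<in> set (geod E v w)" unfolding x_def P_def[symmetric] using len3 by simp
    have M: "dnode E d x * ell V E d v w = ell V E d v x * ell V E d x w"
      using ell_mult[OF vV xN xP] .
    have pos: "0 < dnode E d v * dnode E d x" using dnode_pos less.prems xN by simp
    have "(ell V E d v x)^2 * (ell V E d x w)^2 < (dnode E d v * dnode E d x) * (dnode E d x * dnode E d w)"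
      by (rule mult_strict_mono[OF IH1 IH2 pos]) simp
    then have "(dnode E d x * dnode E d x) * (ell V E d v w)^2 < (dnode E d x * dnode E d x) * (dnode E d v * dnode E d w)"
      by (metis M power_mult_distrib mult.commute mult.left_commute power2_eq_square)
    then show ?thesis by simp
  qed
qed



lemma leaf_rel:
  assumes uN: "u \<in> nodes V E" and vN: "v \<in> nodes V E" and eA: "e \<in> edges_at E v"
    and lL: "l \<in> Lset V E v e"
  shows "(e \<notin> pe (geod E u v) \<longrightarrow> dnode E d v * ell V E d u l = ell V E d u v * ell V E d v l) \<and>
         (e \<in> pe (geod E u v) \<longrightarrow> ell V E d u v * ell V E d v l < dnode E d v * ell V E d u l)"
proof -
  have lV: "l \<in> V" using lL unfolding Lset_def leaves_def by blast
  have uV: "u \<in> V" and vV: "v \<in> V" using uN vN nodesV by auto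
  have eQ: "e \<in> pe (geod E v l)" using lL unfolding Lset_def geod_edges_pe by blast
  have ve: "v \<in> e" using eA unfolding edges_at_def by blast
  define Q where "Q = geod E v l"
  have pQ: "is_path E v l Q" unfolding Q_def using geod_path vV lV by blast
  have Q1: "1 < length Q" "e = {v, Q!1}" using pe_hd[OF pQ _ ve] eQ unfolding Q_def by auto
  have Q0: "Q!0 = v" "Q \<noteq> []" using pQ unfolding is_path_def by (auto simp: hd_conv_nth)
  have distQ: "distinct Q" using pQ unfolding is_path_def by simp
  show ?thesis
  proof (cases "u = v")
    case True
    then have "pe (geod E u v) = {}" using geod_self vV by simp
    then show ?thesis using True unfolding ell_def by simp
  next
    case uv: False
    define P where "P = geod E v u"
    have pP: "is_path E v u P" unfolding P_def using geod_path vV uV by blast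
    have P0: "P!0 = v" "P \<noteq> []" using pP unfolding is_path_def by (auto simp: hd_conv_nth)
    have distP: "distinct P" using pP unfolding is_path_def by simp
    have Pl: "P!(length P - 1) = u" using pP unfolding is_path_def by (auto simp: last_conv_nth)
    have guv: "geod E u v = rev P" unfolding P_def using geod_rev vV uV by blast
    have peuv: "pe (geod E u v) = pe P" unfolding guv pe_rev ..
    have setuv: "set (geod E u v) = set P" unfolding guv by simp
    have tP: "take (Suc 0) P = [v]" using P0 by (cases P) auto
    have tQ: "take (Suc 0) Q = [v]" using Q0 by (cases Q) auto
    have tk1: "take (Suc 0) P = take (Suc 0) Q" using tP tQ by simp
    have MED: "\<And>m. m < length P \<Longrightarrow> m < length Q \<Longrightarrow> take (Suc m) P = take (Suc m) Q \<Longrightarrow>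
       \<exists>k\<ge>m. k < length P \<and> k < length Q \<and> take (Suc k) P = take (Suc k) Q \<and> P ! k \<in> set (geod E u l)"
      unfolding P_def Q_def by (rule median[OF vV uV lV])
    have partA: "e \<notin> pe P \<Longrightarrow> dnode E d v * ell V E d u l = ell V E d u v * ell V E d v l"
    proof -
      assume eP: "e \<notin> pe P"
      have "0 < length P" "0 < length Q" using P0 Q0 by auto
      then obtain k where k: "k < length P" "k < length Q" "take (Suc k) P = take (Suc k) Q" "P!k \<in> set (geod E u l)"
        using MED[OF _ _ tk1] by (metis le0)
      have "k = 0"
      proof (rule ccontr)
        assume "k \<noteq> 0"
        then have "take (Suc k) P ! 1 = take (Suc k) Q ! 1" using k(3) by simp
        then have PQ1: "P!1 = Q!1" using \<open>k \<noteq> 0\<close> by simp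
        have "1 < length P" using k(1) \<open>k \<noteq> 0\<close> by simp
        then have "{P!0, P!Suc 0} \<in> {{P!i, P!Suc i} | i. Suc i < length P}" by (intro CollectI exI[of _ 0]) simp
        then have "{P!0, P!Suc 0} \<in> pe P" by (simp only: pe_conv)
        then have "e \<in> pe P" using Q1(2) PQ1 P0 by simp
        then show False using eP by simp
      qed
      then have "v \<in> set (geod E u l)" using k(4) P0 by simp
      then show ?thesis using ell_mult[OF uV lV vN] by blast
    qed
    have partB: "e \<in> pe P \<Longrightarrow> ell V E d u v * ell V E d v l < dnode E d v * ell V E d u l"
    proof -
      assume eP: "e \<in> pe P"
      have P1: "1 < length P" "e = {v, P!1}" using pe_hd[OF pP eP ve] by auto
      have dcP: "\<forall>p<length P. \<forall>q<length P. p \<noteq> q \<longrightarrow> P!p \<noteq> P!q" using distP distinct_conv_nth by blast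
      have dcQ: "\<forall>p<length Q. \<forall>q<length Q. p \<noteq> q \<longrightarrow> Q!p \<noteq> Q!q" using distQ distinct_conv_nth by blast
      have "P!1 \<noteq> v" using dcP[rule_format, of 1 0] P1 P0 by auto
      moreover have "Q!1 \<noteq> v" using dcQ[rule_format, of 1 0] Q1 Q0 by auto
      ultimately have PQ1: "P!1 = Q!1" using P1(2) Q1(2) unfolding doubleton_eq_iff by blast
      have tk2: "take (Suc 1) P = take (Suc 1) Q"
      proof (rule nth_equalityI)
        show "length (take (Suc 1) P) = length (take (Suc 1) Q)" using P1 Q1 by simp
        fix i assume "i < length (take (Suc 1) P)"
        then have "i = 0 \<or> i = 1" by auto
        then show "take (Suc 1) P ! i = take (Suc 1) Q ! i" using PQ1 P0 Q0 by auto
      qed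
      obtain k where k: "1 \<le> k" "k < length P" "k < length Q" "take (Suc k) P = take (Suc k) Q"
          "P!k \<in> set (geod E u l)"
        using MED[OF P1(1) Q1(1) tk2] by blast
      define w where "w = P!k"
      have wQ: "w = Q!k"
      proof -
        have "take (Suc k) P ! k = take (Suc k) Q ! k" using k(4) by simp
        then show ?thesis unfolding w_def by simp
      qed
      have wv: "w \<noteq> v" unfolding w_def using dcP[rule_format, of k 0] k P0 by auto
      have wN: "w \<in> nodes V E"
      proof (cases "Suc k < length P")
        case True
        then show ?thesis unfolding w_def using interior_node[OF pP vV] k by simp
      next
        case False
        then have "k = length P - 1" using k by simp
        then show ?thesis unfolding w_def using Pl uN by simp
      qed
      have wV: "w \<in> V" using wN nodesV by blast
      have w1: "w \<in> set (geod E u l)" using k(5) unfolding w_def .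
      have w2: "w \<in> set (geod E u v)" unfolding setuv w_def using k by simp
      have w3: "w \<in> set (geod E v l)" unfolding Q_def[symmetric] wQ using k by simp
      have m1: "dnode E d w * ell V E d u l = ell V E d u w * ell V E d w l" using ell_mult[OF uV lV wN w1] .
      have m2: "dnode E d w * ell V E d u v = ell V E d u w * ell V E d v w"
        using ell_mult[OF uV vV wN w2] ell_sym[OF wV vV] by simp
      have m3: "dnode E d w * ell V E d v l = ell V E d v w * ell V E d w l" using ell_mult[OF vV lV wN w3] .
      have ki: "(ell V E d v w)^2 < dnode E d v * dnode E d w" using key_ineq[OF vN wN wv[symmetric]] .
      define Dw where "Dw = dnode E d w"
      define Dv where "Dv = dnode E d v"
      define Z where "Z = ell V E d v w"
      define Lul where "Lul = ell V E d u l"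
      have posUL: "0 < Dw * Lul" unfolding Dw_def Lul_def using dnode_pos[OF wN] ell_pos[of u l] uN by simp
      have eq: "(Dw * Dw) * (ell V E d u v * ell V E d v l) = (Dw * Lul) * Z^2"
      proof -
        have "(Dw * Dw) * (ell V E d u v * ell V E d v l) = (Dw * ell V E d u v) * (Dw * ell V E d v l)"
          by (simp add: ac_simps)
        also have "\<dots> = ell V E d u w * Z * (Z * ell V E d w l)" unfolding Dw_def Z_def m2 m3 ..
        also have "\<dots> = (ell V E d u w * ell V E d w l) * Z^2" by (simp add: power2_eq_square ac_simps)
        also have "\<dots> = (Dw * Lul) * Z^2" unfolding Dw_def Lul_def m1 ..
        finally show ?thesis .
      qed
      have "(Dw * Lul) * Z^2 < (Dw * Lul) * (Dv * Dw)"
        using ki posUL unfolding Z_def Dv_def Dw_def by simp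
      then have "(Dw * Dw) * (ell V E d u v * ell V E d v l) < (Dw * Dw) * (Dv * Lul)"
        unfolding eq by (simp add: ac_simps)
      then show ?thesis unfolding Dv_def Lul_def by simp
    qed
    show ?thesis using partA partB unfolding peuv by blast
  qed
qed

end

theorem lemma2p17:
  fixes V :: "'v set" and E :: "'v set set" and d :: "'v \<Rightarrow> 'v set \<Rightarrow> nat"
    and \<alpha> :: "'v \<Rightarrow> nat" and u v :: 'v and e :: "'v set"
  assumes "splice_tree V E"
    and "pos_weights V E d"
    and "edge_determinant V E d"
    and "semigroup_cond V E d"
    and "u \<in> nodes V E" and "v \<in> nodes V E"
    and "e \<in> edges_at E v"
    and "admissible V E d v e \<alpha>"
  shows "dotp V E (wvec V E d u) (coweight V E \<alpha> v e) \<ge> ell V E d u v \<and>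
         (dotp V E (wvec V E d u) (coweight V E \<alpha> v e) = ell V E d u v
            \<longleftrightarrow> e \<notin> geod_edges E u v)"
proof -
  interpret sp V E d using assms(1-3) unfolding splice_tree_def by unfold_locales auto
  have finL: "finite (leaves V E)" using finV unfolding leaves_def by simp
  have LsubL: "Lset V E v e \<subseteq> leaves V E" unfolding Lset_def by blast
  have finLs: "finite (Lset V E v e)" using finL LsubL finite_subset by blast
  define S where "S = (\<Sum>l\<in>Lset V E v e. ell V E d u l * \<alpha> l)"
  have dot: "dotp V E (wvec V E d u) (coweight V E \<alpha> v e) = S"
    unfolding dotp_def wvec_def coweight_def S_def
    by (rule sum.mono_neutral_cong_right) (use finL LsubL in auto)
  have adm: "dnode E d v = (\<Sum>l\<in>Lset V E v e. \<alpha> l * ell V E d v l)"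
    using assms(8) unfolding admissible_def .
  have Dv: "0 < dnode E d v" using dnode_pos assms(6) by blast
  have LR: "\<And>l. l \<in> Lset V E v e \<Longrightarrow>
      (e \<notin> pe (geod E u v) \<longrightarrow> dnode E d v * ell V E d u l = ell V E d u v * ell V E d v l) \<and>
      (e \<in> pe (geod E u v) \<longrightarrow> ell V E d u v * ell V E d v l < dnode E d v * ell V E d u l)"
    using leaf_rel assms(5-7) by blast
  have dvS: "dnode E d v * S = (\<Sum>l\<in>Lset V E v e. \<alpha> l * (dnode E d v * ell V E d u l))"
    unfolding S_def sum_distrib_left by (simp add: ac_simps)
  have uvD: "ell V E d u v * dnode E d v = (\<Sum>l\<in>Lset V E v e. \<alpha> l * (ell V E d u v * ell V E d v l))"
    unfolding adm sum_distrib_left by (simp add: ac_simps)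
  have caseA: "S = ell V E d u v" if nA: "e \<notin> pe (geod E u v)"
  proof -
    have "dnode E d v * S = ell V E d u v * dnode E d v"
      unfolding dvS uvD using LR nA by (intro sum.cong) auto
    then show ?thesis using Dv by simp
  qed
  have caseB: "ell V E d u v < S" if nB: "e \<in> pe (geod E u v)"
  proof -
    have "\<exists>l\<in>Lset V E v e. 0 < \<alpha> l * ell V E d v l"
    proof (rule ccontr)
      assume "\<not> ?thesis"
      then have "\<forall>l\<in>Lset V E v e. \<alpha> l * ell V E d v l = 0" by auto
      then have "dnode E d v = 0" unfolding adm by (rule sum.neutral)
      then show False using Dv by simp
    qed
    then obtain l0 where l0: "l0 \<in> Lset V E v e" "0 < \<alpha> l0" by auto
    have "ell V E d u v * dnode E d v < dnode E d v * S"
      unfolding dvS uvD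
    proof (rule sum_strict_mono_ex1[OF finLs])
      show "\<forall>x\<in>Lset V E v e. \<alpha> x * (ell V E d u v * ell V E d v x) \<le> \<alpha> x * (dnode E d v * ell V E d u x)"
        using LR nB by (simp add: less_imp_le)
      show "\<exists>a\<in>Lset V E v e. \<alpha> a * (ell V E d u v * ell V E d v a) < \<alpha> a * (dnode E d v * ell V E d u a)"
        using LR[OF l0(1)] nB l0 by auto
    qed
    then show ?thesis using Dv by (simp add: mult.commute)
  qed
  show ?thesis
  proof (cases "e \<in> geod_edges E u v")
    case True
    then show ?thesis using caseB unfolding dot geod_edges_pe by auto
  next
    case False
    then show ?thesis using caseA unfolding dot geod_edges_pe by auto
  qed
qed

end
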